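(* Let $\Sigma$ be a non-orientable surface (possibly with boundary), let $D\subset\Sigma$ be an oriented diagram of a pseudo-classical knot in $\Sigma\times[0,1]$ with a labeling of its $2$-cabling $D^2$, and let $x$ be a crossing of $D$. Then: (1) Reversing the orientation of $D$, and also relabeling $D^2$, each turns the positive smoothing at $x$ into the negative one and vice versa, regardless of whether $x$ is of type $1$ or type $2$. (2) The crossing change operation at $x$ turns the positive smoothing at $x$ into the negative one and vice versa if $x$ is of type $1$, and does not change which smoothing is positive if $x$ is of type $2$. (3) The positive smoothing at $x$ is the one determined by the crossing of the $4$-crossing pattern of $x$ at which the overgoing arc of $R(D)$ enters the pattern; in particular, the actual direction of the undergoing arc of $D$ at $x$ and the actual labeling of the undergoing arcs of $D^2$ at $x$ do not affect which smoothing at $x$ is positive.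
   Context: $\Sigma\times[0,1]$ is the non-orientable $3$-manifold with fixed product structure; knots in it are represented by diagrams on $\Sigma$. A knot is pseudo-classical if it is an orientation-preserving loop in $\Sigma\times[0,1]$; then its diagram $D$ is an orientation-preserving loop in $\Sigma$. The $2$-cabling $D^2$ replaces $D$ by two parallel copies preserving over/under information; it has two components. A labeling of $D^2$ names one component $R(D)$ and the other $L(D)$; relabeling swaps the names; both components are oriented consistently with $D$. Each crossing $x$ of $D$ gives a pattern of $4$ crossings of $D^2$, which correspond bijectively to the four angles of $D$ at $x$. The input crossing $\mathrm{In}(x)$ is the crossing of the pattern at which both strands through it enter the pattern (traversing in the positive direction). The sign of $x$ is $1$ if $R(D)$ goes over $L(D)$ at $\mathrm{In}(x)$; $-1$ if $L(D)$ goes over $R(D)$ there; $i$ if $R(D)$ goes over itself there; $-i$ if $L(D)$ goes over itself there. $x$ is of type $1$ if $\operatorname{sign}(x)=\pm1$ and of type $2$ if $\operatorname{sign}(x)=\pm i$. A smoothing of $x$ pairs two opposite (vertical) angles at $x$, equivalently two diagonal crossings of the pattern; it is said to be determined by either of these crossings. The smoothing determined by $\mathrm{In}(x)$ is called along the orientation; the other is across the orientation. The positive smoothing at $x$ is the one along the orientation if $\operatorname{sign}(x)\in\{1,i\}$ and across the orientation if $\operatorname{sign}(x)\in\{-1,-i\}$; the other smoothing is negative. The crossing change at $x$ swaps over- and under-branches at $x$. *)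

theory Defs
  imports Complex_Main
begin

text \<open>Local combinatorial model of a crossing x of an oriented diagram D of a
pseudo-classical knot, together with the four-crossing pattern of x in the
2-cabling D^2 and a labeling of D^2.  We work in a small disk around x with a
chosen chart: the two branches of D through x are branch A (along the first
coordinate axis) and branch B (along the second coordinate axis).\<close>

datatype pm = P | M

fun neg :: "pm \<Rightarrow> pm" where
  "neg P = M" | "neg M = P"

datatype branch = A | B

datatype label = R | L

text \<open>An angle of D at x (equivalently, a crossing of the pattern): the pair
(side with respect to the first coordinate, side with respect to the second
coordinate).  The crossing of the pattern in angle (a,b) is the crossing of the
copy of branch B lying on side a with the copy of branch A lying on side b.\<close>
type_synonym angle = "pm \<times> pm"

text \<open>A strand of D^2 near x: a copy of a branch, given by the side on which it lies.\<close>
type_synonym strand = "branch \<times> pm"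

record crossing =
  dirA :: pm      \<comment> \<open>direction in which D traverses branch A (along first axis)\<close>
  dirB :: pm      \<comment> \<open>direction in which D traverses branch B (along second axis)\<close>
  sideRA :: pm    \<comment> \<open>side (second coordinate) of the copy of A belonging to R(D)\<close>
  sideRB :: pm    \<comment> \<open>side (first coordinate) of the copy of B belonging to R(D)\<close>
  overA :: bool

definition strand_label :: "crossing \<Rightarrow> strand \<Rightarrow> label" where
  "strand_label c s = (case s of
      (A, b) \<Rightarrow> (if b = sideRA c then R else L)
    | (B, a) \<Rightarrow> (if a = sideRB c then R else L))"

definition over_strand :: "crossing \<Rightarrow> angle \<Rightarrow> strand" where
  "over_strand c q = (if overA c then (A, snd q) else (B, fst q))"

definition under_strand :: "crossing \<Rightarrow> angle \<Rightarrow> strand" where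
  "under_strand c q = (if overA c then (B, fst q) else (A, snd q))"

text \<open>The crossing of the pattern at which a strand enters the pattern
(traversing in the positive direction).\<close>
definition entry :: "crossing \<Rightarrow> strand \<Rightarrow> angle" where
  "entry c s = (case s of
      (A, b) \<Rightarrow> (neg (dirA c), b)
    | (B, a) \<Rightarrow> (a, neg (dirB c)))"

definition In :: "crossing \<Rightarrow> angle" where
  "In c = (THE q. entry c (over_strand c q) = q \<and> entry c (under_strand c q) = q)"

definition sign :: "crossing \<Rightarrow> complex" where
  "sign c = (let q = In c;
                 ov = strand_label c (over_strand c q);
                 un = strand_label c (under_strand c q)
             in if ov = R \<and> un = L then 1
                else if ov = L \<and> un = R then -1
                else if ov = R \<and> un = R then \<i>
                else - \<i>)"

definition type1 :: "crossing \<Rightarrow> bool" where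
  "type1 c \<longleftrightarrow> sign c \<in> {1, -1}"

definition type2 :: "crossing \<Rightarrow> bool" where
  "type2 c \<longleftrightarrow> sign c \<in> {\<i>, -\<i>}"

definition opposite :: "angle \<Rightarrow> angle" where
  "opposite q = (neg (fst q), neg (snd q))"

text \<open>A smoothing at x pairs two opposite angles; it is determined by either.\<close>
definition smoothing_det :: "angle \<Rightarrow> angle set" where
  "smoothing_det q = {q, opposite q}"

definition smoothings :: "angle set set" where
  "smoothings = range smoothing_det"

definition along :: "crossing \<Rightarrow> angle set" where
  "along c = smoothing_det (In c)"

definition across :: "crossing \<Rightarrow> angle set" where
  "across c = (THE s. s \<in> smoothings \<and> s \<noteq> along c)"

definition positive_smoothing :: "crossing \<Rightarrow> angle set" where
  "positive_smoothing c = (if sign c \<in> {1, \<i>} then along c else across c)"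

definition negative_smoothing :: "crossing \<Rightarrow> angle set" where
  "negative_smoothing c = (if sign c \<in> {1, \<i>} then across c else along c)"

definition reverse_orientation :: "crossing \<Rightarrow> crossing" where
  "reverse_orientation c = c\<lparr>dirA := neg (dirA c), dirB := neg (dirB c)\<rparr>"

definition relabel :: "crossing \<Rightarrow> crossing" where
  "relabel c = c\<lparr>sideRA := neg (sideRA c), sideRB := neg (sideRB c)\<rparr>"

definition crossing_change :: "crossing \<Rightarrow> crossing" where
  "crossing_change c = c\<lparr>overA := \<not> overA c\<rparr>"

definition over_R_strand :: "crossing \<Rightarrow> strand" where
  "over_R_strand c = (if overA c then (A, sideRA c) else (B, sideRB c))"

definition same_over :: "crossing \<Rightarrow> crossing \<Rightarrow> bool" where
  "same_over c c' \<longleftrightarrow> overA c' = overA c \<and>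
     (if overA c then dirA c' = dirA c \<and> sideRA c' = sideRA c
      else dirB c' = dirB c \<and> sideRB c' = sideRB c)"

end

theory Submission
  imports Defs
begin

lemma neg_neq[simp]: "neg x \<noteq> x" "x \<noteq> neg x" "neg (neg x) = x"
  by (cases x; simp)+

lemma In_eq: "In c = (neg (dirA c), neg (dirB c))"
  unfolding In_def
proof (rule the_equality)
  show "entry c (over_strand c (neg (dirA c), neg (dirB c))) = (neg (dirA c), neg (dirB c)) \<and>
    entry c (under_strand c (neg (dirA c), neg (dirB c))) = (neg (dirA c), neg (dirB c))"
    by (simp add: entry_def over_strand_def under_strand_def)
next
  fix q assume "entry c (over_strand c q) = q \<and> entry c (under_strand c q) = q"
  then show "q = (neg (dirA c), neg (dirB c))"
    by (cases q) (auto simp: entry_def over_strand_def under_strand_def split: if_splits)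
qed

lemma cdist[simp]: "- \<i> \<noteq> 1" "(1::complex) \<noteq> - \<i>" "- 1 \<noteq> \<i>" "\<i> \<noteq> - 1"
  "\<i> \<noteq> 1" "1 \<noteq> \<i>" "- \<i> \<noteq> -1" "-1 \<noteq> - \<i>" "\<i> \<noteq> - \<i>" "- \<i> \<noteq> \<i>"
  "(-1::complex) \<noteq> 1" "(1::complex) \<noteq> -1"
  by (simp_all add: complex_eq_iff)

lemma pm_all: "(\<forall>x::pm. Q x) \<longleftrightarrow> Q P \<and> Q M"
  by (metis pm.exhaust)

lemma UNIV_angle: "(UNIV :: angle set) = {(P,P),(P,M),(M,P),(M,M)}"
  apply (rule set_eqI)
  apply (case_tac x)
  apply (case_tac a; case_tac b; simp)
  done

lemma smoothings_eq: "smoothings = {{(P,P),(M,M)}, {(P,M),(M,P)}}"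
  unfolding smoothings_def UNIV_angle
  by (auto simp: smoothing_det_def opposite_def)

lemma across_eq: "across c = smoothing_det (neg (dirA c), dirB c)"
  unfolding across_def
proof (rule the_equality)
  show "smoothing_det (neg (dirA c), dirB c) \<in> smoothings \<and>
    smoothing_det (neg (dirA c), dirB c) \<noteq> along c"
    unfolding along_def In_eq smoothings_def smoothing_det_def opposite_def
    by (cases "dirA c"; cases "dirB c"; auto)
next
  fix s assume "s \<in> smoothings \<and> s \<noteq> along c"
  then show "s = smoothing_det (neg (dirA c), dirB c)"
    unfolding along_def In_eq smoothings_eq smoothing_det_def opposite_def
    by (cases "dirA c"; cases "dirB c"; auto)
qed

lemma sd_eq: "smoothing_det (a,b) = smoothing_det (c,d) \<longleftrightarrow> ((a = b) = (c = d))"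
  unfolding smoothing_det_def opposite_def
  by (cases a; cases b; cases c; cases d; simp add: doubleton_eq_iff)

lemma all_cases:
  fixes c :: crossing
  shows "(\<And>a b ra rb ov. Q \<lparr>dirA = a, dirB = b, sideRA = ra, sideRB = rb, overA = ov\<rparr>) \<Longrightarrow> Q c"
  by (cases c) simp
lemma sign_eq: "sign c = (let ov = (if overA c then neg (dirB c) = sideRA c else neg (dirA c) = sideRB c);
   un = (if overA c then neg (dirA c) = sideRB c else neg (dirB c) = sideRA c) in
   if ov \<and> \<not> un then 1 else if \<not> ov \<and> un then -1 else if ov \<and> un then \<i> else - \<i>)"
  by (simp add: sign_def In_eq strand_label_def over_strand_def under_strand_def Let_def)
definition ovR :: "crossing \<Rightarrow> bool" where
  "ovR c = (if overA c then neg (dirB c) = sideRA c else neg (dirA c) = sideRB c)"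

lemma sign_in: "sign c \<in> {1, \<i>} \<longleftrightarrow> ovR c"
  by (simp add: sign_eq ovR_def Let_def)

lemma pos_eq: "positive_smoothing c = smoothing_det (if ovR c then (neg (dirA c), neg (dirB c)) else (neg (dirA c), dirB c))"
  unfolding positive_smoothing_def sign_in by (simp add: along_def In_eq across_eq)

lemma neg_eq: "negative_smoothing c = smoothing_det (if ovR c then (neg (dirA c), dirB c) else (neg (dirA c), neg (dirB c)))"
  unfolding negative_smoothing_def sign_in by (simp add: along_def In_eq across_eq)

lemma t1: "type1 c \<longleftrightarrow> (let ov = (if overA c then neg (dirB c) = sideRA c else neg (dirA c) = sideRB c);
   un = (if overA c then neg (dirA c) = sideRB c else neg (dirB c) = sideRA c) in ov \<noteq> un)"
  by (simp add: type1_def sign_eq Let_def)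

lemma t2: "type2 c \<longleftrightarrow> (let ov = (if overA c then neg (dirB c) = sideRA c else neg (dirA c) = sideRB c);
   un = (if overA c then neg (dirA c) = sideRB c else neg (dirB c) = sideRA c) in ov = un)"
  by (simp add: type2_def sign_eq Let_def)

lemma sdif: "smoothing_det (if b then x else y) = (if b then smoothing_det x else smoothing_det y)"
  by simp

lemma part1: "(positive_smoothing (reverse_orientation c) = negative_smoothing c \<and>
     negative_smoothing (reverse_orientation c) = positive_smoothing c \<and>
     positive_smoothing (relabel c) = negative_smoothing c \<and>
     negative_smoothing (relabel c) = positive_smoothing c)"
  by (cases "dirA c"; cases "dirB c"; cases "sideRA c"; cases "sideRB c"; cases "overA c"; simp add: pos_eq neg_eq ovR_def reverse_orientation_def relabel_def sd_eq)
lemma part2: "type1 c \<Longrightarrow>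
       positive_smoothing (crossing_change c) = negative_smoothing c \<and>
       negative_smoothing (crossing_change c) = positive_smoothing c"
  by (cases "dirA c"; cases "dirB c"; cases "sideRA c"; cases "sideRB c"; cases "overA c"; simp add: pos_eq neg_eq ovR_def t1 Let_def crossing_change_def sd_eq)
lemma part3: "type2 c \<Longrightarrow>
       positive_smoothing (crossing_change c) = positive_smoothing c \<and>
       negative_smoothing (crossing_change c) = negative_smoothing c"
  by (cases "dirA c"; cases "dirB c"; cases "sideRA c"; cases "sideRB c"; cases "overA c"; simp add: pos_eq neg_eq ovR_def t2 Let_def crossing_change_def sd_eq)
lemma key: "positive_smoothing c = smoothing_det (entry c (over_R_strand c))"
  by (cases "dirA c"; cases "dirB c"; cases "sideRA c"; cases "sideRB c"; cases "overA c"; simp add: pos_eq ovR_def over_R_strand_def entry_def sd_eq)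

theorem lemma3:
  fixes c :: crossing
  shows
   "(positive_smoothing (reverse_orientation c) = negative_smoothing c \<and>
     negative_smoothing (reverse_orientation c) = positive_smoothing c \<and>
     positive_smoothing (relabel c) = negative_smoothing c \<and>
     negative_smoothing (relabel c) = positive_smoothing c) \<and>
    (type1 c \<longrightarrow>
       positive_smoothing (crossing_change c) = negative_smoothing c \<and>
       negative_smoothing (crossing_change c) = positive_smoothing c) \<and>
    (type2 c \<longrightarrow>
       positive_smoothing (crossing_change c) = positive_smoothing c \<and>
       negative_smoothing (crossing_change c) = negative_smoothing c) \<and>
    positive_smoothing c = smoothing_det (entry c (over_R_strand c)) \<and>
    (\<forall>c'. same_over c c' \<longrightarrow> positive_smoothing c' = positive_smoothing c)"
proof -
  have so: "\<forall>c'. same_over c c' \<longrightarrow> positive_smoothing c' = positive_smoothing c"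
    by (auto simp: key same_over_def over_R_strand_def entry_def)
  show ?thesis using part1 part2 part3 key so by blast
qed

end
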